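(* Let $m\ge2$, $n\ge1$, let $G_m=BS(1,m)=\langle a,t\mid tat^{-1}=a^m\rangle$ and let $A_m$ be the normal subgroup of $G_m$ generated by $a$ (so $G_m=A_m\rtimes\langle t\rangle$ with $A_m\cong\mathbb Z[1/m]$). (1) If $\rho:G_m\to T_n(\mathbb Z[1/m])$ is a special representation, then $\rho^{-1}(U_n(\mathbb Z[1/m]))=A_m$. (2) If $m$ is even, then every injective homomorphism $\rho:G_m\to T_n(\mathbb Z[1/m])$ is a special representation.
   Context: $T_n(\mathbb Z[1/m])$ is the group of invertible upper triangular $n\times n$ matrices over $\mathbb Z[1/m]$ (i.e. upper triangular with diagonal entries in $(\mathbb Z[1/m])^\times$), and $U_n(\mathbb Z[1/m])$ is its subgroup of matrices with all diagonal entries $1$. A special representation of $G_m$ is an injective homomorphism $\rho:G_m\to T_n(\mathbb Z[1/m])$ with $\rho(A_m)\subseteq U_n(\mathbb Z[1/m])$. *)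

theory Defs
  imports "HOL-Algebra.Generated_Groups" "Jordan_Normal_Form.Matrix"
begin

definition Zinv :: "nat \<Rightarrow> rat set" where
  "Zinv m = {q. \<exists>z::int. \<exists>k::nat. q = of_int z / (of_nat m) ^ k}"

text \<open>Concrete model of BS(1,m) = Z[1/m] \<rtimes> Z: the pair (b,k) is the affine map
  x \<mapsto> m^k x + b; a = (1,0), t = (0,1), and t a t^-1 = a^m.\<close>
definition BS :: "nat \<Rightarrow> (rat \<times> int) monoid" where
  "BS m = \<lparr> carrier = Zinv m \<times> UNIV,
            Group.monoid.mult = (\<lambda>x y. (fst x + (of_nat m) powi (snd x) * fst y, snd x + snd y)),
            Group.monoid.one = (0, 0) \<rparr>"

definition gen_a :: "rat \<times> int" where "gen_a = (1, 0)"
definition gen_t :: "rat \<times> int" where "gen_t = (0, 1)"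

definition A_sub :: "nat \<Rightarrow> (rat \<times> int) set" where
  "A_sub m = generate (BS m) {g \<otimes>\<^bsub>BS m\<^esub> gen_a \<otimes>\<^bsub>BS m\<^esub> inv\<^bsub>BS m\<^esub> g | g. g \<in> carrier (BS m)}"

definition T_mat :: "nat \<Rightarrow> nat \<Rightarrow> rat mat set" where
  "T_mat n m = {M. M \<in> carrier_mat n n
      \<and> (\<forall>i<n. \<forall>j<n. M $$ (i,j) \<in> Zinv m)
      \<and> (\<forall>i<n. \<forall>j<n. j < i \<longrightarrow> M $$ (i,j) = 0)
      \<and> (\<forall>i<n. M $$ (i,i) \<noteq> 0 \<and> inverse (M $$ (i,i)) \<in> Zinv m)}"

definition U_mat :: "nat \<Rightarrow> nat \<Rightarrow> rat mat set" where
  "U_mat n m = {M. M \<in> T_mat n m \<and> (\<forall>i<n. M $$ (i,i) = 1)}"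

definition inj_rep :: "nat \<Rightarrow> nat \<Rightarrow> (rat \<times> int \<Rightarrow> rat mat) \<Rightarrow> bool" where
  "inj_rep m n \<rho> \<longleftrightarrow>
     (\<forall>g \<in> carrier (BS m). \<rho> g \<in> T_mat n m)
   \<and> (\<forall>g \<in> carrier (BS m). \<forall>h \<in> carrier (BS m). \<rho> (g \<otimes>\<^bsub>BS m\<^esub> h) = \<rho> g * \<rho> h)
   \<and> inj_on \<rho> (carrier (BS m))"

definition special_rep :: "nat \<Rightarrow> nat \<Rightarrow> (rat \<times> int \<Rightarrow> rat mat) \<Rightarrow> bool" where
  "special_rep m n \<rho> \<longleftrightarrow> inj_rep m n \<rho> \<and> \<rho> ` A_sub m \<subseteq> U_mat n m"

end

theory Submission imports Defs begin

lemma Zinv_int: "of_int z \<in> Zinv m"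
  unfolding Zinv_def by (rule CollectI, rule exI[of _ z], rule exI[of _ 0]) simp

lemma Zinv_add: assumes "m > 0" "a \<in> Zinv m" "b \<in> Zinv m" shows "a + b \<in> Zinv m"
proof -
  obtain z k w l where a: "a = of_int z / of_nat m ^ k" and b: "b = of_int w / of_nat m ^ l"
    using assms unfolding Zinv_def by blast
  have "a + b = of_int (z * int m ^ l + w * int m ^ k) / of_nat m ^ (k + l)"
    using assms(1) by (simp add: a b field_simps power_add)
  thus ?thesis unfolding Zinv_def by blast
qed

lemma Zinv_mult: assumes "m > 0" "a \<in> Zinv m" "b \<in> Zinv m" shows "a * b \<in> Zinv m"
proof -
  obtain z k w l where a: "a = of_int z / of_nat m ^ k" and b: "b = of_int w / of_nat m ^ l"
    using assms unfolding Zinv_def by blast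
  have "a * b = of_int (z * w) / of_nat m ^ (k + l)"
    using assms(1) by (simp add: a b field_simps power_add)
  thus ?thesis unfolding Zinv_def by blast
qed

lemma Zinv_uminus: assumes "a \<in> Zinv m" shows "- a \<in> Zinv m"
proof -
  obtain z k where a: "a = of_int z / of_nat m ^ k"
    using assms unfolding Zinv_def by blast
  have "- a = of_int (- z) / of_nat m ^ k" by (simp add: a)
  thus ?thesis unfolding Zinv_def by blast
qed

lemma Zinv_powi: assumes "m > 0" shows "(of_nat m :: rat) powi k \<in> Zinv m"
proof (cases "k \<ge> 0")
  case True
  then obtain j where kj: "k = int j" by (metis nonneg_eq_int)
  have "(of_nat m :: rat) powi k = of_int (int m ^ j) / of_nat m ^ 0"
    unfolding kj by simp
  thus ?thesis unfolding Zinv_def by blast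
next
  case False
  then obtain j where kj: "k = - int j" by (metis le_cases neg_0_le_iff_le nonneg_eq_int minus_minus)
  have "(of_nat m :: rat) powi k = of_int 1 / of_nat m ^ j"
    unfolding kj by (simp add: power_int_minus divide_inverse)
  thus ?thesis unfolding Zinv_def by blast
qed

lemma BS_mult: "(b, k) \<otimes>\<^bsub>BS m\<^esub> (c, l) = (b + of_nat m powi k * c, k + l)"
  by (simp add: BS_def)

lemma BS_one: "\<one>\<^bsub>BS m\<^esub> = (0, 0)" by (simp add: BS_def)

lemma BS_carrier: "carrier (BS m) = Zinv m \<times> UNIV" by (simp add: BS_def)

lemma BS_group: assumes "m > 0" shows "group (BS m)"
proof (rule groupI)
  fix x y assume "x \<in> carrier (BS m)" "y \<in> carrier (BS m)"
  then show "x \<otimes>\<^bsub>BS m\<^esub> y \<in> carrier (BS m)"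
    using assms by (cases x, cases y) (auto simp: BS_mult BS_carrier intro!: Zinv_add Zinv_mult Zinv_powi)
next
  show "\<one>\<^bsub>BS m\<^esub> \<in> carrier (BS m)" using Zinv_int[of 0 m] by (simp add: BS_one BS_carrier)
next
  fix x y z assume "x \<in> carrier (BS m)" "y \<in> carrier (BS m)" "z \<in> carrier (BS m)"
  then show "x \<otimes>\<^bsub>BS m\<^esub> y \<otimes>\<^bsub>BS m\<^esub> z = x \<otimes>\<^bsub>BS m\<^esub> (y \<otimes>\<^bsub>BS m\<^esub> z)"
    using assms by (cases x, cases y, cases z) (auto simp: BS_mult power_int_add algebra_simps)
next
  fix x assume "x \<in> carrier (BS m)" then show "\<one>\<^bsub>BS m\<^esub> \<otimes>\<^bsub>BS m\<^esub> x = x"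
    by (cases x) (simp add: BS_one BS_mult)
next
  fix x assume x: "x \<in> carrier (BS m)"
  obtain b k where xe: "x = (b, k)" by (cases x)
  have "(- (of_nat m powi (-k)) * b, -k) \<in> carrier (BS m)"
    using x assms by (auto simp: xe BS_carrier intro!: Zinv_mult Zinv_powi Zinv_uminus)
  moreover have "(- (of_nat m powi (-k)) * b, -k) \<otimes>\<^bsub>BS m\<^esub> x = \<one>\<^bsub>BS m\<^esub>"
    using assms by (simp add: xe BS_mult BS_one)
  ultimately show "\<exists>y\<in>carrier (BS m). y \<otimes>\<^bsub>BS m\<^esub> x = \<one>\<^bsub>BS m\<^esub>" by blast
qed

lemma BS_inv: assumes "m > 0" "b \<in> Zinv m"
  shows "inv\<^bsub>BS m\<^esub> (b, k) = (- (of_nat m powi (-k)) * b, -k)"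
proof -
  interpret group "BS m" using BS_group[OF assms(1)] .
  show ?thesis
    using assms by (intro inv_equality) (auto simp: BS_mult BS_one BS_carrier
          intro!: Zinv_mult Zinv_powi Zinv_uminus)
qed


lemma conj_a: assumes "m > 0" "b \<in> Zinv m"
  shows "(b, k) \<otimes>\<^bsub>BS m\<^esub> gen_a \<otimes>\<^bsub>BS m\<^esub> inv\<^bsub>BS m\<^esub> (b, k) = (of_nat m powi k, 0)"
  using assms by (simp add: BS_inv BS_mult gen_a_def power_int_minus field_simps)

lemma A_sub_eq: assumes "m > 0" shows "A_sub m = Zinv m \<times> {0::int}"
proof -
  interpret G: group "BS m" using BS_group[OF assms] .
  let ?H = "{g \<otimes>\<^bsub>BS m\<^esub> gen_a \<otimes>\<^bsub>BS m\<^esub> inv\<^bsub>BS m\<^esub> g | g. g \<in> carrier (BS m)}"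
  have Hsub: "?H \<subseteq> Zinv m \<times> {0::int}"
  proof
    fix h assume "h \<in> ?H"
    then obtain b k where "b \<in> Zinv m" "h = (b, k) \<otimes>\<^bsub>BS m\<^esub> gen_a \<otimes>\<^bsub>BS m\<^esub> inv\<^bsub>BS m\<^esub> (b, k)"
      by (auto simp: BS_carrier)
    then show "h \<in> Zinv m \<times> {0::int}" using assms conj_a Zinv_powi by auto
  qed
  have sg: "subgroup (Zinv m \<times> {0::int}) (BS m)"
  proof (rule G.subgroupI)
    show "Zinv m \<times> {0::int} \<subseteq> carrier (BS m)" by (auto simp: BS_carrier)
    show "Zinv m \<times> {0::int} \<noteq> {}" using Zinv_int[of 0 m] by auto
    fix a assume "a \<in> Zinv m \<times> {0::int}" then show "inv\<^bsub>BS m\<^esub> a \<in> Zinv m \<times> {0::int}"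
      using assms by (auto simp: BS_inv intro!: Zinv_uminus)
  next
    fix a b assume "a \<in> Zinv m \<times> {0::int}" "b \<in> Zinv m \<times> {0::int}"
    then show "a \<otimes>\<^bsub>BS m\<^esub> b \<in> Zinv m \<times> {0::int}"
      using assms by (auto simp: BS_mult intro!: Zinv_add)
  qed
  have HC: "?H \<subseteq> carrier (BS m)" using Hsub by (auto simp: BS_carrier)
  have "A_sub m \<subseteq> Zinv m \<times> {0::int}"
    unfolding A_sub_def by (rule G.generate_subgroup_incl[OF Hsub sg])
  moreover have "Zinv m \<times> {0::int} \<subseteq> A_sub m"
  proof
    fix p assume "p \<in> Zinv m \<times> {0::int}"
    then obtain z k where p: "p = (of_int z / of_nat m ^ k, 0)" unfolding Zinv_def by auto
    have sA: "subgroup (A_sub m) (BS m)" unfolding A_sub_def by (rule G.generate_is_subgroup[OF HC])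
    let ?x = "(of_nat m powi (- int k) :: rat)"
    have "(0, - int k) \<otimes>\<^bsub>BS m\<^esub> gen_a \<otimes>\<^bsub>BS m\<^esub> inv\<^bsub>BS m\<^esub> (0, - int k) = (?x, 0)"
      using conj_a[OF assms Zinv_int[of 0 m]] by simp
    moreover have "(0::rat, - int k) \<in> carrier (BS m)" using Zinv_int[of 0 m] by (simp add: BS_carrier)
    ultimately have "(?x, 0) \<in> ?H" by (intro CollectI exI[of _ "(0, - int k)"]) auto
    then have c: "(?x, 0) \<in> A_sub m" unfolding A_sub_def by (rule generate.incl)
    have nat: "(of_nat j * ?x, 0) \<in> A_sub m" for j
    proof (induction j)
      case 0 show ?case using subgroup.one_closed[OF sA] by (simp add: BS_one)
    next
      case (Suc j)
      have "(of_nat j * ?x, 0) \<otimes>\<^bsub>BS m\<^esub> (?x, 0) \<in> A_sub m"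
        by (rule subgroup.m_closed[OF sA Suc c])
      then show ?case by (simp add: BS_mult algebra_simps)
    qed
    have xz: "of_int z / of_nat m ^ k = of_int z * ?x"
      by (simp add: power_int_minus divide_inverse)
    show "p \<in> A_sub m"
    proof (cases "z \<ge> 0")
      case True
      then show ?thesis using nat[of "nat z"] by (simp add: p xz)
    next
      case False
      have "inv\<^bsub>BS m\<^esub> (of_nat (nat (-z)) * ?x, 0) \<in> A_sub m"
        by (rule subgroup.m_inv_closed[OF sA nat])
      moreover have "of_nat (nat (-z)) * ?x \<in> Zinv m"
        using Hsub \<open>(?x, 0) \<in> ?H\<close> assms by (auto intro!: Zinv_mult Zinv_int[of "int _", simplified])
      ultimately show ?thesis using False assms by (simp add: p xz BS_inv)
    qed
  qed
  ultimately show ?thesis by blast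
qed


definition lev :: "nat \<Rightarrow> nat \<Rightarrow> rat mat \<Rightarrow> bool" where
  "lev n s X \<longleftrightarrow> (\<forall>i<n. \<forall>j<n. j < i + s \<longrightarrow> X $$ (i,j) = (if i = j then 1 else 0))"

lemma mult_entry: assumes "X \<in> carrier_mat n n" "Y \<in> carrier_mat n n" "i < n" "j < n"
  shows "(X * Y) $$ (i,j) = (\<Sum>l<n. X $$ (i,l) * Y $$ (l,j))"
  using assms by (simp add: index_mult_mat scalar_prod_def lessThan_atLeast0)

lemma lev_mult: assumes "X \<in> carrier_mat n n" "Y \<in> carrier_mat n n" "lev n s X" "lev n s Y" "s \<ge> 1"
  shows "lev n s (X * Y)"
  unfolding lev_def
proof (intro allI impI)
  fix i j assume ij: "i < n" "j < n" "j < i + s"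
  have "(X * Y) $$ (i,j) = (\<Sum>l<n. if l = i then X $$ (i,i) * Y $$ (i,j) else 0)"
    unfolding mult_entry[OF assms(1,2) ij(1,2)]
  proof (rule sum.cong)
    fix l assume l: "l \<in> {..<n}"
    show "X $$ (i,l) * Y $$ (l,j) = (if l = i then X $$ (i,i) * Y $$ (i,j) else 0)"
    proof (cases "l = i")
      case False
      show ?thesis
      proof (cases "l < i + s")
        case True then show ?thesis using assms(3) False l ij unfolding lev_def by auto
      next
        case F2: False
        then have "Y $$ (l,j) = 0" using assms(4) l ij unfolding lev_def by auto
        then show ?thesis using False by simp
      qed
    qed simp
  qed simp
  also have "\<dots> = X $$ (i,i) * Y $$ (i,j)" using ij by simp
  also have "\<dots> = (if i = j then 1 else 0)" using assms(3,4) ij assms(5) unfolding lev_def by auto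
  finally show "(X * Y) $$ (i,j) = (if i = j then 1 else 0)" .
qed

lemma lev_entry: assumes "X \<in> carrier_mat n n" "Y \<in> carrier_mat n n" "lev n 1 X" "lev n s Y" "s \<ge> 1"
  "i + s < n"
  shows "(X * Y) $$ (i,i+s) = X $$ (i,i+s) + Y $$ (i,i+s)"
    and "(Y * X) $$ (i,i+s) = X $$ (i,i+s) + Y $$ (i,i+s)"
proof -
  have i: "i < n" using assms by simp
  have "(X * Y) $$ (i,i+s) = (\<Sum>l<n. (if l = i then Y $$ (i,i+s) else 0) + (if l = i + s then X $$ (i,i+s) else 0))"
    unfolding mult_entry[OF assms(1,2) i assms(6)]
  proof (rule sum.cong)
    fix l assume l: "l \<in> {..<n}"
    show "X $$ (i,l) * Y $$ (l,i+s) = (if l = i then Y $$ (i,i+s) else 0) + (if l = i + s then X $$ (i,i+s) else 0)"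
    proof (cases "l < i")
      case True then show ?thesis using assms(3) l i unfolding lev_def by auto
    next
      case False
      show ?thesis
      proof (cases "l = i \<or> l = i + s")
        case True then show ?thesis using assms(3,4,5,6) i unfolding lev_def by auto
      next
        case F2: False
        then have "Y $$ (l,i+s) = 0" using assms(4,6) l False unfolding lev_def by auto
        then show ?thesis using F2 by simp
      qed
    qed
  qed simp
  also have "\<dots> = X $$ (i,i+s) + Y $$ (i,i+s)" using i assms(6) by (simp add: sum.distrib)
  finally show "(X * Y) $$ (i,i+s) = X $$ (i,i+s) + Y $$ (i,i+s)" .
  have "(Y * X) $$ (i,i+s) = (\<Sum>l<n. (if l = i then X $$ (i,i+s) else 0) + (if l = i + s then Y $$ (i,i+s) else 0))"
    unfolding mult_entry[OF assms(2,1) i assms(6)]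
  proof (rule sum.cong)
    fix l assume l: "l \<in> {..<n}"
    show "Y $$ (i,l) * X $$ (l,i+s) = (if l = i then X $$ (i,i+s) else 0) + (if l = i + s then Y $$ (i,i+s) else 0)"
    proof (cases "l = i \<or> l = i + s")
      case True then show ?thesis using assms(3,4,5,6) i unfolding lev_def by auto
    next
      case F2: False
      show ?thesis
      proof (cases "l < i + s")
        case True
        then have "Y $$ (i,l) = 0" using assms(4) l i F2 unfolding lev_def by auto
        then show ?thesis using F2 by simp
      next
        case False
        then have "X $$ (l,i+s) = 0" using assms(3) l i F2 assms(6) unfolding lev_def by auto
        then show ?thesis using F2 by simp
      qed
    qed
  qed simp
  also have "\<dots> = X $$ (i,i+s) + Y $$ (i,i+s)" using i assms(6) by (simp add: sum.distrib)
  finally show "(Y * X) $$ (i,i+s) = X $$ (i,i+s) + Y $$ (i,i+s)" .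
qed

lemma diag_mult: assumes "X \<in> carrier_mat n n" "Y \<in> carrier_mat n n"
  "\<forall>i<n. \<forall>j<n. j < i \<longrightarrow> X $$ (i,j) = 0" "\<forall>i<n. \<forall>j<n. j < i \<longrightarrow> Y $$ (i,j) = 0" "i < n"
  shows "(X * Y) $$ (i,i) = X $$ (i,i) * Y $$ (i,i)"
proof -
  have "(X * Y) $$ (i,i) = (\<Sum>l<n. if l = i then X $$ (i,i) * Y $$ (i,i) else 0)"
    unfolding mult_entry[OF assms(1,2,5,5)]
  proof (rule sum.cong)
    fix l assume l: "l \<in> {..<n}"
    show "X $$ (i,l) * Y $$ (l,i) = (if l = i then X $$ (i,i) * Y $$ (i,i) else 0)"
    proof (cases "l < i")
      case True then show ?thesis using assms(3,5) l by auto
    next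
      case False
      then show ?thesis using assms(4,5) l by (cases "l = i") auto
    qed
  qed simp
  then show ?thesis using assms(5) by simp
qed


lemma lev_mono: "lev n s X \<Longrightarrow> t \<le> s \<Longrightarrow> lev n t X"
  unfolding lev_def by auto

lemma U_lev: "X \<in> U_mat n m \<Longrightarrow> lev n 1 X"
  unfolding lev_def U_mat_def T_mat_def by (auto simp: less_Suc_eq)

lemma T_carrier: "X \<in> T_mat n m \<Longrightarrow> X \<in> carrier_mat n n" unfolding T_mat_def by auto

lemma lev_full_eq: assumes "X \<in> carrier_mat n n" "Y \<in> carrier_mat n n" "lev n n X" "lev n n Y"
  shows "X = Y"
  by (rule eq_matI) (use assms in \<open>auto simp: lev_def\<close>)

lemma exists_step: "1 \<le> n \<Longrightarrow> P (1::nat) \<Longrightarrow> \<not> P n \<Longrightarrow> \<exists>s. 1 \<le> s \<and> s < n \<and> P s \<and> \<not> P (Suc s)"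
proof (induction n)
  case 0 then show ?case by simp
next
  case (Suc n)
  show ?case
  proof (cases "n = 0")
    case True then show ?thesis using Suc.prems by auto
  next
    case nz: False
    show ?thesis
    proof (cases "P n")
      case True then show ?thesis using Suc.prems nz by (intro exI[of _ n]) auto
    next
      case False then show ?thesis using Suc.IH Suc.prems nz by (metis less_SucI less_one not_less)
    qed
  qed
qed

lemma pow_odd_eq_1: assumes "(x::rat) ^ k = 1" "odd k" shows "x = 1"
proof -
  have k: "k > 0" using assms(2) by (rule odd_pos)
  have "\<bar>x ^ k\<bar> = 1" using assms(1) by simp
  then have "\<bar>x\<bar> ^ k = 1 ^ k" by (simp add: power_abs)
  then have "\<bar>x\<bar> = 1" using power_eq_imp_eq_base[OF _ _ _ k, of "\<bar>x\<bar>" 1] by simp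
  then have "x = 1 \<or> x = -1" by auto
  then show ?thesis using assms by auto
qed

lemma Zinv_0: "(0::rat) \<in> Zinv m" using Zinv_int[of 0 m] by simp
lemma Zinv_nat: "(of_nat j::rat) \<in> Zinv m" using Zinv_int[of "int j" m] by simp
lemma Zinv_1: "(1::rat) \<in> Zinv m" using Zinv_nat[of 1 m] by simp

lemma part1:
  fixes m n :: nat and \<rho>
  assumes m2: "m \<ge> 2" and n1: "n \<ge> 1" and sp: "special_rep m n \<rho>"
  shows "{g \<in> carrier (BS m). \<rho> g \<in> U_mat n m} = A_sub m"
proof -
  have mpos: "m > 0" using m2 by simp
  have ir: "inj_rep m n \<rho>" and AU: "\<rho> ` A_sub m \<subseteq> U_mat n m" using sp unfolding special_rep_def by auto
  have T: "\<And>g. g \<in> carrier (BS m) \<Longrightarrow> \<rho> g \<in> T_mat n m"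
    and hom: "\<And>g h. g \<in> carrier (BS m) \<Longrightarrow> h \<in> carrier (BS m) \<Longrightarrow> \<rho> (g \<otimes>\<^bsub>BS m\<^esub> h) = \<rho> g * \<rho> h"
    and inj: "inj_on \<rho> (carrier (BS m))" using ir unfolding inj_rep_def by auto
  have C: "\<And>g. g \<in> carrier (BS m) \<Longrightarrow> \<rho> g \<in> carrier_mat n n" using T T_carrier by blast
  have homE: "\<And>g h p. g \<in> carrier (BS m) \<Longrightarrow> h \<in> carrier (BS m) \<Longrightarrow> g \<otimes>\<^bsub>BS m\<^esub> h = p \<Longrightarrow> \<rho> p = \<rho> g * \<rho> h"
    using hom by blast
  have Aeq: "A_sub m = Zinv m \<times> {0}" by (rule A_sub_eq[OF mpos])
  have AUl: "\<And>q. q \<in> Zinv m \<Longrightarrow> lev n 1 (\<rho> (q, 0))" using AU Aeq U_lev by blast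
  show ?thesis
  proof (intro equalityI subsetI)
    fix g assume "g \<in> {g \<in> carrier (BS m). \<rho> g \<in> U_mat n m}"
    then obtain b k where g: "g = (b, k)" and b: "b \<in> Zinv m" and Ug: "\<rho> (b, k) \<in> U_mat n m"
      by (cases g) (auto simp: BS_carrier)
    show "g \<in> A_sub m"
    proof (cases "k = 0")
      case True then show ?thesis using g b Aeq by simp
    next
      case kn: False
      have cr: "\<And>q l. q \<in> Zinv m \<Longrightarrow> (q, l) \<in> carrier (BS m)" by (simp add: BS_carrier)
      define V where "V = \<rho> (0, k)"
      have "(-b, 0) \<otimes>\<^bsub>BS m\<^esub> (b, k) = (0, k)" by (simp add: BS_mult)
      then have Ve: "V = \<rho> (-b, 0) * \<rho> (b, k)" unfolding V_def
        by (rule homE[OF cr[of "-b" 0, OF Zinv_uminus[OF b]] cr[OF b]])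
      have Vc: "V \<in> carrier_mat n n" unfolding V_def by (rule C[OF cr[OF Zinv_0]])
      have Vl: "lev n 1 V" unfolding Ve
        by (rule lev_mult[OF C[OF cr[OF Zinv_uminus[OF b]]] C[OF cr[OF b]] AUl[OF Zinv_uminus[OF b]] U_lev[OF Ug]]) simp
      define u where "u = \<rho> (1, 0)"
      have uc: "u \<in> carrier_mat n n" unfolding u_def by (rule C[OF cr[OF Zinv_1]])
      have ul: "lev n 1 u" unfolding u_def by (rule AUl[OF Zinv_1])
      define P where "P j = \<rho> (of_nat j, 0)" for j :: nat
      have Pc: "P j \<in> carrier_mat n n" for j unfolding P_def by (rule C[OF cr[OF Zinv_nat]])
      have P1: "P 1 = u" unfolding P_def u_def by simp
      have PS: "P (Suc j) = P j * u" for j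
      proof -
        have "(of_nat j, 0) \<otimes>\<^bsub>BS m\<^esub> (1, 0) = (of_nat (Suc j) :: rat, 0::int)" by (simp add: BS_mult)
        then show ?thesis unfolding P_def u_def by (rule homE[OF cr[of _ 0, OF Zinv_nat] cr[of _ 0, OF Zinv_1]])
      qed
      define K where "K = nat \<bar>k\<bar>"
      define M where "M = m ^ K"
      have K1: "K \<ge> 1" using kn unfolding K_def by simp
      have M2: "M \<ge> 2"
      proof -
        have "m ^ 1 \<le> m ^ K" using K1 m2 by (intro power_increasing) auto
        then show ?thesis using m2 by (simp add: M_def)
      qed
      have MS: "M = Suc (M - 1)" using M2 by simp
      have notfull: "\<not> lev n n u"
      proof
        assume full: "lev n n u"
        have "lev n n (P (Suc j))" for j
        proof (induction j)
          case 0 then show ?case using P1 full by simp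
        next
          case (Suc j) then show ?case unfolding PS[of "Suc j"]
            using lev_mult[OF Pc uc _ full] n1 by simp
        qed
        then have "P M = u" using lev_full_eq[OF Pc uc _ full] MS by metis
        then have "\<rho> (of_nat M, 0) = \<rho> (1, 0)" unfolding P_def u_def .
        then have "(of_nat M :: rat, 0::int) = (1, 0)"
          by (rule inj_onD[OF inj _ cr[of "of_nat M" 0, OF Zinv_nat] cr[of 1 0, OF Zinv_1]])
        then show False using M2 by simp
      qed
      obtain s where s: "1 \<le> s" "s < n" "lev n s u" "\<not> lev n (Suc s) u"
        using exists_step[of n "\<lambda>s. lev n s u", OF n1 ul notfull] by blast
      obtain i j where ij: "i < n" "j < n" "j < i + Suc s" "u $$ (i,j) \<noteq> (if i = j then 1 else 0)"
        using s(4) unfolding lev_def by blast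
      have jis: "j = i + s" using s(3) ij unfolding lev_def by (metis less_SucE add_Suc_right)
      have isn: "i + s < n" and uis: "u $$ (i, i+s) \<noteq> 0" using ij jis s(1) by auto
      have Pent: "lev n s (P (Suc j)) \<and> P (Suc j) $$ (i, i+s) = of_nat (Suc j) * u $$ (i, i+s)" for j
      proof (induction j)
        case 0 then show ?case using P1 s(3) by simp
      next
        case (Suc j)
        have l1: "lev n 1 (P (Suc j))" using lev_mono[OF conjunct1[OF Suc] s(1)] .
        have a: "lev n s (P (Suc j) * u)" by (rule lev_mult[OF Pc uc conjunct1[OF Suc] s(3) s(1)])
        have b: "(P (Suc j) * u) $$ (i,i+s) = of_nat (Suc j) * u $$ (i,i+s) + u $$ (i,i+s)"
          using lev_entry(1)[OF Pc uc l1 s(3) s(1) isn] conjunct2[OF Suc] by simp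
        have c: "of_nat (Suc j) * u $$ (i,i+s) + u $$ (i,i+s) = of_nat (Suc (Suc j)) * u $$ (i,i+s)"
          by (simp add: distrib_right)
        show ?case unfolding PS[of "Suc j"] using a b c by simp
      qed
      have PM: "lev n s (P M)" "P M $$ (i, i+s) = of_nat M * u $$ (i, i+s)"
        using Pent[of "M - 1"] MS by metis+
      have "of_nat M * u $$ (i, i+s) = u $$ (i, i+s)"
      proof (cases "k > 0")
        case True
        have kK: "k = int K" unfolding K_def using True by simp
        have "(0, k) \<otimes>\<^bsub>BS m\<^esub> (1, 0) = (of_nat M, 0) \<otimes>\<^bsub>BS m\<^esub> ((0::rat), k)"
          by (simp add: BS_mult kK M_def)
        note eq = this
        have "V * u = \<rho> ((0, k) \<otimes>\<^bsub>BS m\<^esub> (1, 0))" unfolding V_def u_def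
          by (rule hom[OF cr[of 0 k, OF Zinv_0] cr[of 1 0, OF Zinv_1], symmetric])
        also have "\<dots> = \<rho> ((of_nat M, 0) \<otimes>\<^bsub>BS m\<^esub> ((0::rat), k))" unfolding eq ..
        also have "\<dots> = P M * V" unfolding P_def V_def
          by (rule hom[OF cr[of "of_nat M" 0, OF Zinv_nat] cr[of 0 k, OF Zinv_0]])
        finally have "V * u = P M * V" .
        then have "(V * u) $$ (i, i+s) = (P M * V) $$ (i, i+s)" by simp
        then show ?thesis using lev_entry(1)[OF Vc uc Vl s(3) s(1) isn] lev_entry(2)[OF Vc Pc Vl PM(1) s(1) isn]
          PM(2) by simp
      next
        case False
        have kK: "k = - int K" unfolding K_def using False kn by simp
        have "(0, k) \<otimes>\<^bsub>BS m\<^esub> (of_nat M, 0) = (1, 0) \<otimes>\<^bsub>BS m\<^esub> ((0::rat), k)"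
          using mpos by (simp add: BS_mult kK M_def power_int_minus)
        note eq = this
        have "V * P M = \<rho> ((0, k) \<otimes>\<^bsub>BS m\<^esub> (of_nat M, 0))" unfolding V_def P_def
          by (rule hom[OF cr[of 0 k, OF Zinv_0] cr[of "of_nat M" 0, OF Zinv_nat], symmetric])
        also have "\<dots> = \<rho> ((1, 0) \<otimes>\<^bsub>BS m\<^esub> ((0::rat), k))" unfolding eq ..
        also have "\<dots> = u * V" unfolding u_def V_def
          by (rule hom[OF cr[of 1 0, OF Zinv_1] cr[of 0 k, OF Zinv_0]])
        finally have "V * P M = u * V" .
        then have "(V * P M) $$ (i, i+s) = (u * V) $$ (i, i+s)" by simp
        then show ?thesis using lev_entry(2)[OF Vc uc Vl s(3) s(1) isn] lev_entry(1)[OF Vc Pc Vl PM(1) s(1) isn]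
          PM(2) by simp
      qed
      then have "(of_nat M - 1) * u $$ (i, i+s) = 0" by (simp add: algebra_simps)
      then show ?thesis using uis M2 by simp
    qed
  next
    fix g assume "g \<in> A_sub m" then show "g \<in> {g \<in> carrier (BS m). \<rho> g \<in> U_mat n m}"
      using AU Aeq by (auto simp: BS_carrier)
  qed
qed


lemma part2:
  fixes m n :: nat and \<rho>
  assumes m2: "m \<ge> 2" and ev: "even m" and ir: "inj_rep m n \<rho>"
  shows "special_rep m n \<rho>"
proof -
  have mpos: "m > 0" using m2 by simp
  have T: "\<And>g. g \<in> carrier (BS m) \<Longrightarrow> \<rho> g \<in> T_mat n m"
    and hom: "\<And>g h. g \<in> carrier (BS m) \<Longrightarrow> h \<in> carrier (BS m) \<Longrightarrow> \<rho> (g \<otimes>\<^bsub>BS m\<^esub> h) = \<rho> g * \<rho> h"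
    using ir unfolding inj_rep_def by auto
  have cr: "\<And>q l. q \<in> Zinv m \<Longrightarrow> (q, l) \<in> carrier (BS m)" by (simp add: BS_carrier)
  have Aeq: "A_sub m = Zinv m \<times> {0}" by (rule A_sub_eq[OF mpos])
  have diag1: "\<rho> (q, 0) $$ (i, i) = 1" if q: "q \<in> Zinv m" and i: "i < n" for q i
  proof -
    define d where "d g = \<rho> g $$ (i, i)" for g
    have dm: "d (g \<otimes>\<^bsub>BS m\<^esub> h) = d g * d h" if "g \<in> carrier (BS m)" "h \<in> carrier (BS m)" for g h
      unfolding d_def hom[OF that]
      by (rule diag_mult) (use T[OF that(1)] T[OF that(2)] i in \<open>auto simp: T_mat_def\<close>)
    have dmE: "d p = d g * d h" if "g \<in> carrier (BS m)" "h \<in> carrier (BS m)" "g \<otimes>\<^bsub>BS m\<^esub> h = p" for g h p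
      using dm[OF that(1,2)] that(3) by simp
    have dnz: "d g \<noteq> 0" if "g \<in> carrier (BS m)" for g
      using T[OF that] i unfolding d_def T_mat_def by auto
    define x where "x = d (1, 0)"
    have dS: "d (of_nat (Suc j), 0) = x ^ Suc j" for j
    proof (induction j)
      case 0 then show ?case unfolding x_def by simp
    next
      case (Suc j)
      have e: "(of_nat (Suc j), 0) \<otimes>\<^bsub>BS m\<^esub> (1, 0) = (of_nat (Suc (Suc j)) :: rat, 0::int)" by (simp add: BS_mult)
      have "d (of_nat (Suc (Suc j)), 0) = d (of_nat (Suc j), 0) * x"
        unfolding x_def by (rule dmE[OF cr[of _ 0, OF Zinv_nat] cr[of 1 0, OF Zinv_1] e])
      then show ?case using Suc by simp
    qed
    have r: "(0, 1) \<otimes>\<^bsub>BS m\<^esub> (1, 0) = (of_nat m, 0) \<otimes>\<^bsub>BS m\<^esub> ((0::rat), 1::int)"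
      by (simp add: BS_mult)
    have "d (0,1) * x = d ((0, 1) \<otimes>\<^bsub>BS m\<^esub> (1, 0))"
      unfolding x_def by (rule dm[OF cr[of 0 1, OF Zinv_0] cr[of 1 0, OF Zinv_1], symmetric])
    also have "\<dots> = d ((of_nat m, 0) \<otimes>\<^bsub>BS m\<^esub> ((0::rat), 1::int))" unfolding r ..
    also have "\<dots> = d (of_nat m, 0) * d (0, 1)"
      by (rule dm[OF cr[of "of_nat m" 0, OF Zinv_nat] cr[of 0 1, OF Zinv_0]])
    finally have "d (0,1) * x = d (of_nat m, 0) * d (0, 1)" .
    moreover have "d (of_nat m, 0) = x ^ m" using dS[of "m - 1"] mpos by simp
    ultimately have "d (0,1) * x = x ^ m * d (0, 1)" by simp
    also have "\<dots> = d (0, 1) * x ^ m" by (rule mult.commute)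
    finally have "d (0,1) * x = d (0, 1) * x ^ m" .
    then have xm: "x = x ^ m" using dnz[OF cr[of 0 1, OF Zinv_0]] by simp
    have xnz: "x \<noteq> 0" unfolding x_def by (rule dnz[OF cr[OF Zinv_1]])
    have "x ^ m = x * x ^ (m - 1)" using mpos by (metis Suc_diff_1 power_Suc)
    then have "x * x ^ (m - 1) = x * 1" using xm by (metis mult_1_right)
    then have "x ^ (m - 1) = 1" by (metis mult_left_cancel xnz)
    moreover have "odd (m - 1)" using ev m2 by simp
    ultimately have x1: "x = 1" by (rule pow_odd_eq_1)
    have d00: "d (0, 0) = 1"
    proof -
      have "(0, 0) \<otimes>\<^bsub>BS m\<^esub> (0, 0) = ((0::rat), 0::int)" by (simp add: BS_mult)
      then have "d (0,0) = d (0,0) * d (0,0)" by (rule dmE[OF cr[of 0 0, OF Zinv_0] cr[of 0 0, OF Zinv_0]])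
      then show ?thesis using dnz[OF cr[OF Zinv_0]] by simp
    qed
    have dnat: "d (of_nat j, 0) = 1" for j
      using d00 dS[of "j - 1"] x1 by (cases j) auto
    have dint: "d (of_int z, 0) = 1" for z
    proof (cases "z \<ge> 0")
      case True then show ?thesis using dnat[of "nat z"] by simp
    next
      case False
      have "(of_int z, 0) \<otimes>\<^bsub>BS m\<^esub> (of_nat (nat (-z)), 0) = ((0::rat), 0::int)"
        using False by (simp add: BS_mult)
      then have "d (0, 0) = d (of_int z, 0) * d (of_nat (nat (-z)), 0)"
        by (rule dmE[OF cr[of _ 0, OF Zinv_int] cr[of _ 0, OF Zinv_nat]])
      then have "d (of_int z, 0) * d (of_nat (nat (-z)), 0) = 1" using d00 by simp
      then show ?thesis using dnat by simp
    qed
    obtain z k where qe: "q = of_int z / of_nat m ^ k" using q unfolding Zinv_def by blast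
    have e: "(0, - int k) \<otimes>\<^bsub>BS m\<^esub> (of_int z, 0) \<otimes>\<^bsub>BS m\<^esub> (0, int k) = (q, 0::int)"
      using mpos by (simp add: BS_mult qe power_int_minus divide_inverse mult.commute)
    have e2: "(0, - int k) \<otimes>\<^bsub>BS m\<^esub> ((0::rat), int k) = (0, 0)" by (simp add: BS_mult)
    have c1: "(0, - int k) \<otimes>\<^bsub>BS m\<^esub> (of_int z, 0) \<in> carrier (BS m)"
      using mpos by (simp add: BS_mult BS_carrier Zinv_mult Zinv_powi Zinv_int)
    have "d (q, 0) = d (0, - int k) * d (of_int z, 0) * d (0, int k)"
      unfolding e[symmetric] dm[OF c1 cr[of 0 "int k", OF Zinv_0]] dm[OF cr[of 0 "- int k", OF Zinv_0] cr[of _ 0, OF Zinv_int]] ..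
    also have "\<dots> = d (0, - int k) * d (0, int k)" using dint by simp
    also have "\<dots> = d (0, 0)" by (rule dmE[OF cr[of 0 "- int k", OF Zinv_0] cr[of 0 "int k", OF Zinv_0] e2, symmetric])
    finally show ?thesis using d00 unfolding d_def by simp
  qed
  have "\<rho> ` A_sub m \<subseteq> U_mat n m"
    using Aeq T cr diag1 by (auto simp: U_mat_def)
  then show ?thesis using ir unfolding special_rep_def by simp
qed

theorem lemma4p5:
  fixes m n :: nat
  assumes "m \<ge> 2" and "n \<ge> 1"
  shows "(\<forall>\<rho>. special_rep m n \<rho> \<longrightarrow>
            {g \<in> carrier (BS m). \<rho> g \<in> U_mat n m} = A_sub m)
       \<and> (even m \<longrightarrow> (\<forall>\<rho>. inj_rep m n \<rho> \<longrightarrow> special_rep m n \<rho>))"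
  using part1[OF assms] part2[OF assms(1)] by blast


thm_deps lemma4p5

end
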